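(* Let $I$ be an index set. For each $i\in I$ let $(X_i,\le_i)$ be a poset and $E_i$ an equivalence relation on $X_i$ with ${\le_i}\subseteq E_i$, and assume $X_i\cap X_j=\varnothing$ for $i\ne j$. Suppose that for each $i\in I$, $\alpha_i:X_i\to X_i$ is an order automorphism of $(X_i,\le_i)$ and $\beta_i:X_i\to X_i$ is a self-inverse dual order automorphism of $(X_i,\le_i)$ with $\alpha_i,\beta_i\subseteq E_i$ and $\beta_i=\alpha_i\circ\beta_i\circ\alpha_i$. Let $X=\bigcup_iX_i$, ${\le}=\bigcup_i{\le_i}$, $E=\bigcup_iE_i$, $\alpha=\bigcup_i\alpha_i$ and $\beta=\bigcup_i\beta_i$ (so $\alpha(x)=\alpha_i(x)$ and $\beta(x)=\beta_i(x)$ for $x\in X_i$). Then: (i) $(X,\le)$ is a poset and $E$ is an equivalence relation on $X$ with ${\le}\subseteq E$; (ii) $\alpha$ is an order automorphism of $(X,\le)$ with $\alpha\subseteq E$; (iii) $\beta$ is a self-inverse dual order automorphism of $(X,\le)$ with $\beta\subseteq E$; (iv) $\beta=\alpha\circ\beta\circ\alpha$; (v) $\mathbf{Dq}(\mathbf E)\cong\prod_{i\in I}\mathbf{Dq}(\mathbf E_i)$.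
   Context: For binary relations: converse $R^\smile$; composition $R\circ S=\{(x,y)\mid\exists z\,((x,z)\in R,(z,y)\in S)\}$. Functions are identified with their graphs. Order automorphism: bijection with $x\le y\iff\alpha(x)\le\alpha(y)$; dual order automorphism: bijection with $x\le y\iff\beta(y)\le\beta(x)$; self-inverse: $\beta\circ\beta=\mathrm{id}$. Given a poset $(Y,\le)$, an equivalence relation $F\supseteq{\le}$ on $Y$, and such $\alpha,\beta\subseteq F$ with $\beta=\alpha\circ\beta\circ\alpha$: $F$ is ordered by $(u,v)\preceq(x,y)$ iff $x\le u$ and $v\le y$, $\mathbf F=(F,\preceq)$; complements are $R^c=F\setminus R$; and $\mathbf{Dq}(\mathbf F)$ is the algebra $\langle\mathsf{Up}(\mathbf F),\cap,\cup,\circ,1,0,{\sim},-,'\rangle$ of up-sets of $\mathbf F$ with $1={\le}$, $0=\alpha\circ({\le}^c)^\smile$, ${\sim}R=(R^\smile\circ0^c)^c$, $-R=(0^c\circ R^\smile)^c$, $R'=\alpha\circ\beta\circ R^c\circ\beta$ (a distributive quasi relation algebra). Here $\mathbf{Dq}(\mathbf E_i)$ is formed with $\le_i,\alpha_i,\beta_i$, and $\mathbf{Dq}(\mathbf E)$ with $\le,\alpha,\beta$. *)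

theory Defs
  imports Main "HOL-Library.FuncSet"
begin

text \<open>Functions are identified with their graphs, i.e. binary relations.
  Relational composition R \<circ> S of the paper (first R, then S) is Isabelle's R O S.\<close>

definition rel_fun_on :: "'a set \<Rightarrow> ('a \<times> 'a) set \<Rightarrow> bool" where
  "rel_fun_on X R \<longleftrightarrow> R \<subseteq> X \<times> X \<and> (\<forall>x\<in>X. \<exists>!y. (x, y) \<in> R)"

definition rel_bij_on :: "'a set \<Rightarrow> ('a \<times> 'a) set \<Rightarrow> bool" where
  "rel_bij_on X R \<longleftrightarrow> rel_fun_on X R \<and> (\<forall>y\<in>X. \<exists>!x. (x, y) \<in> R)"

definition order_aut :: "'a set \<Rightarrow> ('a \<times> 'a) set \<Rightarrow> ('a \<times> 'a) set \<Rightarrow> bool" where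
  "order_aut X le R \<longleftrightarrow> rel_bij_on X R \<and>
     (\<forall>x y x' y'. (x, x') \<in> R \<longrightarrow> (y, y') \<in> R \<longrightarrow> ((x, y) \<in> le \<longleftrightarrow> (x', y') \<in> le))"

definition dual_order_aut :: "'a set \<Rightarrow> ('a \<times> 'a) set \<Rightarrow> ('a \<times> 'a) set \<Rightarrow> bool" where
  "dual_order_aut X le R \<longleftrightarrow> rel_bij_on X R \<and>
     (\<forall>x y x' y'. (x, x') \<in> R \<longrightarrow> (y, y') \<in> R \<longrightarrow> ((x, y) \<in> le \<longleftrightarrow> (y', x') \<in> le))"

definition self_inverse :: "'a set \<Rightarrow> ('a \<times> 'a) set \<Rightarrow> bool" where
  "self_inverse X R \<longleftrightarrow> R O R = Id_on X"

record 'b dqalg =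
  dq_carrier :: "'b set"
  dq_meet :: "'b \<Rightarrow> 'b \<Rightarrow> 'b"
  dq_join :: "'b \<Rightarrow> 'b \<Rightarrow> 'b"
  dq_comp :: "'b \<Rightarrow> 'b \<Rightarrow> 'b"
  dq_one :: "'b"
  dq_zero :: "'b"
  dq_tilde :: "'b \<Rightarrow> 'b"
  dq_minus :: "'b \<Rightarrow> 'b"
  dq_prime :: "'b \<Rightarrow> 'b"

text \<open>Up-sets of F ordered by (u,v) \<preceq> (x,y) iff x \<le> u and v \<le> y.\<close>
definition up_sets :: "('a \<times> 'a) set \<Rightarrow> ('a \<times> 'a) set \<Rightarrow> ('a \<times> 'a) set set" where
  "up_sets F le = {R. R \<subseteq> F \<and>
     (\<forall>u v x y. (u, v) \<in> R \<longrightarrow> (x, y) \<in> F \<longrightarrow> (x, u) \<in> le \<longrightarrow> (v, y) \<in> le \<longrightarrow> (x, y) \<in> R)}"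

definition dq_zero_rel :: "('a \<times> 'a) set \<Rightarrow> ('a \<times> 'a) set \<Rightarrow> ('a \<times> 'a) set \<Rightarrow> ('a \<times> 'a) set" where
  "dq_zero_rel F le alpha = alpha O converse (F - le)"

definition Dq :: "('a \<times> 'a) set \<Rightarrow> ('a \<times> 'a) set \<Rightarrow> ('a \<times> 'a) set \<Rightarrow> ('a \<times> 'a) set
    \<Rightarrow> ('a \<times> 'a) set dqalg" where
  "Dq F le alpha beta =
    \<lparr> dq_carrier = up_sets F le,
      dq_meet = (\<inter>),
      dq_join = (\<union>),
      dq_comp = (O),
      dq_one = le,
      dq_zero = dq_zero_rel F le alpha,
      dq_tilde = (\<lambda>R. F - (converse R O (F - dq_zero_rel F le alpha))),
      dq_minus = (\<lambda>R. F - ((F - dq_zero_rel F le alpha) O converse R)),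
      dq_prime = (\<lambda>R. alpha O beta O (F - R) O beta) \<rparr>"

definition dq_prod :: "'i set \<Rightarrow> ('i \<Rightarrow> 'b dqalg) \<Rightarrow> ('i \<Rightarrow> 'b) dqalg" where
  "dq_prod I A =
    \<lparr> dq_carrier = PiE I (\<lambda>i. dq_carrier (A i)),
      dq_meet = (\<lambda>f g. \<lambda>i\<in>I. dq_meet (A i) (f i) (g i)),
      dq_join = (\<lambda>f g. \<lambda>i\<in>I. dq_join (A i) (f i) (g i)),
      dq_comp = (\<lambda>f g. \<lambda>i\<in>I. dq_comp (A i) (f i) (g i)),
      dq_one = (\<lambda>i\<in>I. dq_one (A i)),
      dq_zero = (\<lambda>i\<in>I. dq_zero (A i)),
      dq_tilde = (\<lambda>f. \<lambda>i\<in>I. dq_tilde (A i) (f i)),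
      dq_minus = (\<lambda>f. \<lambda>i\<in>I. dq_minus (A i) (f i)),
      dq_prime = (\<lambda>f. \<lambda>i\<in>I. dq_prime (A i) (f i)) \<rparr>"

definition dq_iso :: "('b, 'm) dqalg_scheme \<Rightarrow> ('c, 'n) dqalg_scheme \<Rightarrow> ('b \<Rightarrow> 'c) \<Rightarrow> bool" where
  "dq_iso A B h \<longleftrightarrow> bij_betw h (dq_carrier A) (dq_carrier B) \<and>
     (\<forall>x\<in>dq_carrier A. \<forall>y\<in>dq_carrier A.
        h (dq_meet A x y) = dq_meet B (h x) (h y) \<and>
        h (dq_join A x y) = dq_join B (h x) (h y) \<and>
        h (dq_comp A x y) = dq_comp B (h x) (h y)) \<and>
     h (dq_one A) = dq_one B \<and> h (dq_zero A) = dq_zero B \<and>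
     (\<forall>x\<in>dq_carrier A.
        h (dq_tilde A x) = dq_tilde B (h x) \<and>
        h (dq_minus A x) = dq_minus B (h x) \<and>
        h (dq_prime A x) = dq_prime B (h x))"

definition dq_isomorphic :: "('b, 'm) dqalg_scheme \<Rightarrow> ('c, 'n) dqalg_scheme \<Rightarrow> bool" where
  "dq_isomorphic A B \<longleftrightarrow> (\<exists>h. dq_iso A B h)"

end

theory Submission imports Defs begin

locale blk =
  fixes I :: "'i set" and X :: "'i \<Rightarrow> 'a set"
    and le E alpha beta :: "'i \<Rightarrow> ('a \<times> 'a) set"
  assumes poset: "\<And>i. i \<in> I \<Longrightarrow> partial_order_on (X i) (le i)"
    and equivE: "\<And>i. i \<in> I \<Longrightarrow> equiv (X i) (E i)"
    and leE: "\<And>i. i \<in> I \<Longrightarrow> le i \<subseteq> E i"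
    and disj: "\<And>i j. i \<in> I \<Longrightarrow> j \<in> I \<Longrightarrow> i \<noteq> j \<Longrightarrow> X i \<inter> X j = {}"
    and alpha_aut: "\<And>i. i \<in> I \<Longrightarrow> order_aut (X i) (le i) (alpha i)"
    and beta_aut: "\<And>i. i \<in> I \<Longrightarrow> dual_order_aut (X i) (le i) (beta i)"
    and beta_inv: "\<And>i. i \<in> I \<Longrightarrow> self_inverse (X i) (beta i)"
    and alphaE: "\<And>i. i \<in> I \<Longrightarrow> alpha i \<subseteq> E i"
    and betaE: "\<And>i. i \<in> I \<Longrightarrow> beta i \<subseteq> E i"
    and beta_eq: "\<And>i. i \<in> I \<Longrightarrow> beta i = alpha i O beta i O alpha i"
begin

lemma uniq: "i \<in> I \<Longrightarrow> j \<in> I \<Longrightarrow> x \<in> X i \<Longrightarrow> x \<in> X j \<Longrightarrow> i = j"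
  using disj by blast

lemma E_sub: "i \<in> I \<Longrightarrow> E i \<subseteq> X i \<times> X i"
  using equivE by (simp add: equiv_def)
lemma le_sub: "i \<in> I \<Longrightarrow> le i \<subseteq> X i \<times> X i"
  using E_sub leE by blast
lemma alpha_sub: "i \<in> I \<Longrightarrow> alpha i \<subseteq> X i \<times> X i"
  using E_sub alphaE by blast
lemma beta_sub: "i \<in> I \<Longrightarrow> beta i \<subseteq> X i \<times> X i"
  using E_sub betaE by blast

lemma bE: "(x, y) \<in> (\<Union>i\<in>I. E i) \<Longrightarrow> i \<in> I \<Longrightarrow> x \<in> X i \<or> y \<in> X i \<Longrightarrow> (x, y) \<in> E i"
  using E_sub uniq by blast
lemma bL: "(x, y) \<in> (\<Union>i\<in>I. le i) \<Longrightarrow> i \<in> I \<Longrightarrow> x \<in> X i \<or> y \<in> X i \<Longrightarrow> (x, y) \<in> le i"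
  using le_sub uniq by blast
lemma bA: "(x, y) \<in> (\<Union>i\<in>I. alpha i) \<Longrightarrow> i \<in> I \<Longrightarrow> x \<in> X i \<or> y \<in> X i \<Longrightarrow> (x, y) \<in> alpha i"
  using alpha_sub uniq by blast
lemma bB: "(x, y) \<in> (\<Union>i\<in>I. beta i) \<Longrightarrow> i \<in> I \<Longrightarrow> x \<in> X i \<or> y \<in> X i \<Longrightarrow> (x, y) \<in> beta i"
  using beta_sub uniq by blast
lemma subF: "R \<subseteq> (\<Union>i\<in>I. E i) \<Longrightarrow> (x, y) \<in> R \<Longrightarrow> i \<in> I \<Longrightarrow> x \<in> X i \<or> y \<in> X i \<Longrightarrow> (x, y) \<in> E i"
  using bE by blast

lemma alpha_fun: "i \<in> I \<Longrightarrow> x \<in> X i \<Longrightarrow> \<exists>!y. (x, y) \<in> alpha i"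
  using alpha_aut unfolding order_aut_def rel_bij_on_def rel_fun_on_def by blast
lemma alpha_fun2: "i \<in> I \<Longrightarrow> y \<in> X i \<Longrightarrow> \<exists>!x. (x, y) \<in> alpha i"
  using alpha_aut unfolding order_aut_def rel_bij_on_def rel_fun_on_def by blast
lemma beta_fun: "i \<in> I \<Longrightarrow> x \<in> X i \<Longrightarrow> \<exists>!y. (x, y) \<in> beta i"
  using beta_aut unfolding dual_order_aut_def rel_bij_on_def rel_fun_on_def by blast
lemma beta_fun2: "i \<in> I \<Longrightarrow> y \<in> X i \<Longrightarrow> \<exists>!x. (x, y) \<in> beta i"
  using beta_aut unfolding dual_order_aut_def rel_bij_on_def rel_fun_on_def by blast

lemma part1: "partial_order_on (\<Union>i\<in>I. X i) (\<Union>i\<in>I. le i)"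
proof -
  have r: "refl_on (X i) (le i)" "trans (le i)" "antisym (le i)" if "i \<in> I" for i
    using poset[OF that] partial_order_onD by blast+
  have s: "(\<Union>i\<in>I. le i) \<subseteq> (\<Union>i\<in>I. X i) \<times> (\<Union>i\<in>I. X i)" using le_sub by blast
  have "refl_on (\<Union>i\<in>I. X i) (\<Union>i\<in>I. le i)" using r(1) unfolding refl_on_def by blast
  moreover have "trans (\<Union>i\<in>I. le i)"
    unfolding trans_def
  proof (intro allI impI)
    fix x y z assume a: "(x, y) \<in> (\<Union>i\<in>I. le i)" "(y, z) \<in> (\<Union>i\<in>I. le i)"
    then obtain i where i: "i \<in> I" "(x, y) \<in> le i" by blast
    then have "y \<in> X i" using le_sub by blast
    then have "(y, z) \<in> le i" using bL[OF a(2) i(1)] by blast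
    then show "(x, z) \<in> (\<Union>i\<in>I. le i)" using r(2)[OF i(1)] i unfolding trans_def by blast
  qed
  moreover have "antisym (\<Union>i\<in>I. le i)"
    unfolding antisym_def
  proof (intro allI impI)
    fix x y assume a: "(x, y) \<in> (\<Union>i\<in>I. le i)" "(y, x) \<in> (\<Union>i\<in>I. le i)"
    then obtain i where i: "i \<in> I" "(x, y) \<in> le i" by blast
    then have "y \<in> X i" using le_sub by blast
    then have "(y, x) \<in> le i" using bL[OF a(2) i(1)] by blast
    then show "x = y" using r(3)[OF i(1)] i unfolding antisym_def by blast
  qed
  ultimately show ?thesis using s unfolding partial_order_on_def preorder_on_def by blast
qed

lemma part2: "equiv (\<Union>i\<in>I. X i) (\<Union>i\<in>I. E i)"
proof -
  have r: "refl_on (X i) (E i)" "trans (E i)" "sym (E i)" if "i \<in> I" for i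
    using equivE[OF that] unfolding equiv_def by blast+
  have s: "(\<Union>i\<in>I. E i) \<subseteq> (\<Union>i\<in>I. X i) \<times> (\<Union>i\<in>I. X i)" using E_sub by blast
  have "refl_on (\<Union>i\<in>I. X i) (\<Union>i\<in>I. E i)" using r(1) unfolding refl_on_def by blast
  moreover have "sym (\<Union>i\<in>I. E i)" using r(3) unfolding sym_def by blast
  moreover have "trans (\<Union>i\<in>I. E i)"
    unfolding trans_def
  proof (intro allI impI)
    fix x y z assume a: "(x, y) \<in> (\<Union>i\<in>I. E i)" "(y, z) \<in> (\<Union>i\<in>I. E i)"
    then obtain i where i: "i \<in> I" "(x, y) \<in> E i" by blast
    then have "y \<in> X i" using E_sub by blast
    then have "(y, z) \<in> E i" using bE[OF a(2) i(1)] by blast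
    then show "(x, z) \<in> (\<Union>i\<in>I. E i)" using r(2)[OF i(1)] i unfolding trans_def by blast
  qed
  ultimately show ?thesis using s unfolding equiv_def by blast
qed

lemma part3: "(\<Union>i\<in>I. le i) \<subseteq> (\<Union>i\<in>I. E i)" using leE by blast
lemma part5: "(\<Union>i\<in>I. alpha i) \<subseteq> (\<Union>i\<in>I. E i)" using alphaE by blast
lemma part8: "(\<Union>i\<in>I. beta i) \<subseteq> (\<Union>i\<in>I. E i)" using betaE by blast

lemma bij_union:
  assumes S: "\<And>i. i \<in> I \<Longrightarrow> rel_bij_on (X i) (S i)"
  shows "rel_bij_on (\<Union>i\<in>I. X i) (\<Union>i\<in>I. S i)"
proof -
  have sub: "S i \<subseteq> X i \<times> X i" if "i \<in> I" for i using S[OF that] unfolding rel_bij_on_def rel_fun_on_def by blast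
  have bS: "(x, y) \<in> S i" if "(x, y) \<in> (\<Union>i\<in>I. S i)" "i \<in> I" "x \<in> X i \<or> y \<in> X i" for x y i
    using that sub uniq by blast
  have f1: "\<exists>!y. (x, y) \<in> S i" if "i \<in> I" "x \<in> X i" for i x
    using S[OF that(1)] that(2) unfolding rel_bij_on_def rel_fun_on_def by blast
  have f2: "\<exists>!x. (x, y) \<in> S i" if "i \<in> I" "y \<in> X i" for i y
    using S[OF that(1)] that(2) unfolding rel_bij_on_def rel_fun_on_def by blast
  show ?thesis unfolding rel_bij_on_def rel_fun_on_def
  proof (intro conjI ballI)
    show "(\<Union>i\<in>I. S i) \<subseteq> (\<Union>i\<in>I. X i) \<times> (\<Union>i\<in>I. X i)" using sub by blast
  next
    fix x assume "x \<in> (\<Union>i\<in>I. X i)"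
    then obtain i where i: "i \<in> I" "x \<in> X i" by blast
    from f1[OF i] obtain y where y: "(x, y) \<in> S i" by blast
    show "\<exists>!y. (x, y) \<in> (\<Union>i\<in>I. S i)"
    proof (rule ex1I[of _ y])
      show "(x, y) \<in> (\<Union>i\<in>I. S i)" using y i by blast
      fix y' assume "(x, y') \<in> (\<Union>i\<in>I. S i)"
      then have "(x, y') \<in> S i" using bS i by blast
      then show "y' = y" using f1[OF i] y by blast
    qed
  next
    fix y assume "y \<in> (\<Union>i\<in>I. X i)"
    then obtain i where i: "i \<in> I" "y \<in> X i" by blast
    from f2[OF i] obtain x where x: "(x, y) \<in> S i" by blast
    show "\<exists>!x. (x, y) \<in> (\<Union>i\<in>I. S i)"
    proof (rule ex1I[of _ x])
      show "(x, y) \<in> (\<Union>i\<in>I. S i)" using x i by blast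
      fix x' assume "(x', y) \<in> (\<Union>i\<in>I. S i)"
      then have "(x', y) \<in> S i" using bS i by blast
      then show "x' = x" using f2[OF i] x by blast
    qed
  qed
qed

lemma part4: "order_aut (\<Union>i\<in>I. X i) (\<Union>i\<in>I. le i) (\<Union>i\<in>I. alpha i)"
  unfolding order_aut_def
proof (intro conjI allI impI)
  show "rel_bij_on (\<Union>i\<in>I. X i) (\<Union>i\<in>I. alpha i)"
    by (rule bij_union) (use alpha_aut in \<open>simp add: order_aut_def\<close>)
next
  fix x y x' y' assume a: "(x, x') \<in> (\<Union>i\<in>I. alpha i)" "(y, y') \<in> (\<Union>i\<in>I. alpha i)"
  then obtain i j where ij: "i \<in> I" "(x, x') \<in> alpha i" "j \<in> I" "(y, y') \<in> alpha j" by blast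
  have m: "x \<in> X i" "x' \<in> X i" "y \<in> X j" "y' \<in> X j" using ij alpha_sub by blast+
  show "((x, y) \<in> (\<Union>i\<in>I. le i)) = ((x', y') \<in> (\<Union>i\<in>I. le i))"
  proof (cases "i = j")
    case True
    have "((x, y) \<in> le i) = ((x', y') \<in> le i)"
      using alpha_aut[OF ij(1)] ij True unfolding order_aut_def by blast
    then show ?thesis using bL[of x y i] bL[of x' y' i] m ij(1) by blast
  next
    case False
    have "(x, y) \<notin> (\<Union>i\<in>I. le i)" using bL[of x y i] m ij le_sub uniq False by blast
    moreover have "(x', y') \<notin> (\<Union>i\<in>I. le i)" using bL[of x' y' i] m ij le_sub uniq False by blast
    ultimately show ?thesis by blast
  qed
qed

lemma part6: "dual_order_aut (\<Union>i\<in>I. X i) (\<Union>i\<in>I. le i) (\<Union>i\<in>I. beta i)"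
  unfolding dual_order_aut_def
proof (intro conjI allI impI)
  show "rel_bij_on (\<Union>i\<in>I. X i) (\<Union>i\<in>I. beta i)"
    by (rule bij_union) (use beta_aut in \<open>simp add: dual_order_aut_def\<close>)
next
  fix x y x' y' assume a: "(x, x') \<in> (\<Union>i\<in>I. beta i)" "(y, y') \<in> (\<Union>i\<in>I. beta i)"
  then obtain i j where ij: "i \<in> I" "(x, x') \<in> beta i" "j \<in> I" "(y, y') \<in> beta j" by blast
  have m: "x \<in> X i" "x' \<in> X i" "y \<in> X j" "y' \<in> X j" using ij beta_sub by blast+
  show "((x, y) \<in> (\<Union>i\<in>I. le i)) = ((y', x') \<in> (\<Union>i\<in>I. le i))"
  proof (cases "i = j")
    case True
    have "((x, y) \<in> le i) = ((y', x') \<in> le i)"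
      using beta_aut[OF ij(1)] ij True unfolding dual_order_aut_def by blast
    then show ?thesis using bL[of x y i] bL[of y' x' i] m ij(1) by blast
  next
    case False
    have "(x, y) \<notin> (\<Union>i\<in>I. le i)" using bL[of x y i] m ij le_sub uniq False by blast
    moreover have "(y', x') \<notin> (\<Union>i\<in>I. le i)" using bL[of y' x' j] m ij le_sub uniq False by blast
    ultimately show ?thesis by blast
  qed
qed

lemma part7: "self_inverse (\<Union>i\<in>I. X i) (\<Union>i\<in>I. beta i)"
  unfolding self_inverse_def
proof (intro equalityI subsetI)
  fix p assume "p \<in> (\<Union>i\<in>I. beta i) O (\<Union>i\<in>I. beta i)"
  then obtain x y z i where p: "p = (x, z)" "i \<in> I" "(x, y) \<in> beta i" "(y, z) \<in> (\<Union>i\<in>I. beta i)" by blast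
  then have "(y, z) \<in> beta i" using bB beta_sub by blast
  then have "(x, z) \<in> Id_on (X i)" using p beta_inv[OF p(2)] unfolding self_inverse_def by blast
  then show "p \<in> Id_on (\<Union>i\<in>I. X i)" using p by blast
next
  fix p assume "p \<in> Id_on (\<Union>i\<in>I. X i)"
  then obtain x i where p: "p = (x, x)" "i \<in> I" "x \<in> X i" by blast
  then have "(x, x) \<in> beta i O beta i" using beta_inv[OF p(2)] unfolding self_inverse_def by blast
  then show "p \<in> (\<Union>i\<in>I. beta i) O (\<Union>i\<in>I. beta i)" using p by blast
qed

lemma part9: "(\<Union>i\<in>I. beta i) = (\<Union>i\<in>I. alpha i) O (\<Union>i\<in>I. beta i) O (\<Union>i\<in>I. alpha i)"
proof (intro equalityI subsetI)
  fix p assume "p \<in> (\<Union>i\<in>I. beta i)"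
  then obtain i where i: "i \<in> I" "p \<in> beta i" by blast
  then have "p \<in> alpha i O beta i O alpha i" using beta_eq by blast
  then show "p \<in> (\<Union>i\<in>I. alpha i) O (\<Union>i\<in>I. beta i) O (\<Union>i\<in>I. alpha i)" using i by blast
next
  fix p assume "p \<in> (\<Union>i\<in>I. alpha i) O (\<Union>i\<in>I. beta i) O (\<Union>i\<in>I. alpha i)"
  then obtain x y z w i where p: "p = (x, w)" "i \<in> I" "(x, y) \<in> alpha i"
    "(y, z) \<in> (\<Union>i\<in>I. beta i)" "(z, w) \<in> (\<Union>i\<in>I. alpha i)" by blast
  have y: "(y, z) \<in> beta i" using p bB alpha_sub by blast
  have "(z, w) \<in> alpha i" using p y bA beta_sub by blast
  then have "p \<in> alpha i O beta i O alpha i" using p y by blast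
  then show "p \<in> (\<Union>i\<in>I. beta i)" using beta_eq p(2) by blast
qed

abbreviation "FF \<equiv> (\<Union>i\<in>I. E i)"
abbreviation "LL \<equiv> (\<Union>i\<in>I. le i)"
abbreviation "AA \<equiv> (\<Union>i\<in>I. alpha i)"
abbreviation "BB \<equiv> (\<Union>i\<in>I. beta i)"

lemma Ez: "(x, y) \<in> E i \<Longrightarrow> i \<in> I \<Longrightarrow> x \<in> X i \<and> y \<in> X i" using E_sub by blast
lemma Lz: "(x, y) \<in> le i \<Longrightarrow> i \<in> I \<Longrightarrow> x \<in> X i \<and> y \<in> X i \<and> (x, y) \<in> E i" using le_sub leE by blast
lemma Az: "(x, y) \<in> alpha i \<Longrightarrow> i \<in> I \<Longrightarrow> x \<in> X i \<and> y \<in> X i \<and> (x, y) \<in> E i" using alpha_sub alphaE by blast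
lemma Bz: "(x, y) \<in> beta i \<Longrightarrow> i \<in> I \<Longrightarrow> x \<in> X i \<and> y \<in> X i \<and> (x, y) \<in> E i" using beta_sub betaE by blast

lemma up_restrict: "R \<in> up_sets FF LL \<Longrightarrow> i \<in> I \<Longrightarrow> R \<inter> E i \<in> up_sets (E i) (le i)"
  unfolding up_sets_def by blast

lemma up_union: assumes f: "f \<in> PiE I (\<lambda>i. up_sets (E i) (le i))"
  shows "(\<Union>i\<in>I. f i) \<in> up_sets FF LL"
proof -
  have fs: "f i \<subseteq> E i" if "i \<in> I" for i using f that unfolding up_sets_def by blast
  have fu: "(x, y) \<in> f i" if "i \<in> I" "(u, v) \<in> f i" "(x, y) \<in> E i" "(x, u) \<in> le i" "(v, y) \<in> le i" for i u v x y
    using f that unfolding up_sets_def PiE_def Pi_def by blast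
  show ?thesis unfolding up_sets_def
  proof (intro CollectI conjI allI impI)
    show "(\<Union>i\<in>I. f i) \<subseteq> FF" using fs by blast
  next
    fix u v x y assume a: "(u, v) \<in> (\<Union>i\<in>I. f i)" "(x, y) \<in> FF" "(x, u) \<in> LL" "(v, y) \<in> LL"
    then obtain i where i: "i \<in> I" "(u, v) \<in> f i" by blast
    have uv: "u \<in> X i" "v \<in> X i" using fs i E_sub by blast+
    have xu: "(x, u) \<in> le i" using bL[OF a(3) i(1)] uv by blast
    moreover have "(v, y) \<in> le i" using bL[OF a(4) i(1)] uv by blast
    moreover have "x \<in> X i" using Lz[OF xu i(1)] by blast
    moreover have "(x, y) \<in> E i" using bE[OF a(2) i(1)] calculation(3) by blast
    ultimately show "(x, y) \<in> (\<Union>i\<in>I. f i)" using fu i by blast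
  qed
qed

lemma comp_restr: assumes "R \<subseteq> FF" "S \<subseteq> FF" "i \<in> I"
  shows "(R O S) \<inter> E i = (R \<inter> E i) O (S \<inter> E i)"
proof (intro equalityI subsetI)
  fix p assume "p \<in> (R O S) \<inter> E i"
  then obtain x y z where p: "p = (x, z)" "(x, y) \<in> R" "(y, z) \<in> S" "(x, z) \<in> E i" by blast
  have "x \<in> X i" using p(4) Ez assms(3) by blast
  then have xy: "(x, y) \<in> E i" using subF[OF assms(1) p(2) assms(3)] by blast
  then have "y \<in> X i" using Ez assms(3) by blast
  then have "(y, z) \<in> E i" using subF[OF assms(2) p(3) assms(3)] by blast
  then show "p \<in> (R \<inter> E i) O (S \<inter> E i)" using p xy by blast
next
  fix p assume "p \<in> (R \<inter> E i) O (S \<inter> E i)"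
  then obtain x y z where p: "p = (x, z)" "(x, y) \<in> R \<inter> E i" "(y, z) \<in> S \<inter> E i" by blast
  have "trans (E i)" using equivE assms(3) unfolding equiv_def by blast
  then have "(x, z) \<in> E i" using p unfolding trans_def by blast
  then show "p \<in> (R O S) \<inter> E i" using p by blast
qed

lemma one_restr: assumes i: "i \<in> I" shows "LL \<inter> E i = le i"
proof (intro equalityI subsetI)
  fix p assume p: "p \<in> LL \<inter> E i"
  obtain x y where xy: "p = (x, y)" by (cases p)
  have "x \<in> X i" using p xy Ez[OF _ i] by blast
  then show "p \<in> le i" using bL[of x y i] p xy i by blast
next
  fix p assume "p \<in> le i" then show "p \<in> LL \<inter> E i" using i leE by blast
qed

definition "ZZ i = alpha i O converse (E i - le i)"

lemma Etr: "i \<in> I \<Longrightarrow> (x, y) \<in> E i \<Longrightarrow> (y, z) \<in> E i \<Longrightarrow> (x, z) \<in> E i"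
  using equivE[of i] unfolding equiv_def trans_def by blast
lemma Esym: "i \<in> I \<Longrightarrow> (x, y) \<in> E i \<Longrightarrow> (y, x) \<in> E i"
  using equivE[of i] unfolding equiv_def sym_def by blast

lemma zero_restr: assumes i: "i \<in> I" shows "dq_zero_rel FF LL AA \<inter> E i = ZZ i"
proof (intro equalityI subsetI)
  fix p assume p: "p \<in> dq_zero_rel FF LL AA \<inter> E i"
  then obtain x y z where q: "p = (x, y)" "(x, z) \<in> AA" "(y, z) \<in> FF" "(y, z) \<notin> LL" "(x, y) \<in> E i"
    unfolding dq_zero_rel_def by blast
  have "x \<in> X i" using q(5) Ez i by blast
  then have xz: "(x, z) \<in> alpha i" using bA[OF q(2) i] by blast
  then have "z \<in> X i" using Az i by blast
  then have "(y, z) \<in> E i" using bE[OF q(3) i] by blast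
  moreover have "(y, z) \<notin> le i" using q(4) i by blast
  ultimately show "p \<in> ZZ i" unfolding ZZ_def using q(1) xz by blast
next
  fix p assume "p \<in> ZZ i"
  then obtain x y z where q: "p = (x, y)" "(x, z) \<in> alpha i" "(y, z) \<in> E i" "(y, z) \<notin> le i"
    unfolding ZZ_def by blast
  have z: "z \<in> X i" using q(3) Ez i by blast
  have "(y, z) \<notin> LL" using bL[of y z i] z i q(4) by blast
  moreover have "(x, y) \<in> E i" using Etr[OF i _ Esym[OF i q(3)]] Az[OF q(2) i] by blast
  ultimately show "p \<in> dq_zero_rel FF LL AA \<inter> E i" unfolding dq_zero_rel_def
    using q i by blast
qed

lemma tilde_restr: assumes R: "R \<subseteq> FF" and i: "i \<in> I" and Z: "Z \<inter> E i = Zi"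
  shows "(FF - (converse R O (FF - Z))) \<inter> E i = E i - (converse (R \<inter> E i) O (E i - Zi))"
proof -
  have "(x, y) \<in> converse R O (FF - Z) \<longleftrightarrow> (x, y) \<in> converse (R \<inter> E i) O (E i - Zi)"
    if xy: "(x, y) \<in> E i" for x y
  proof
    assume "(x, y) \<in> converse R O (FF - Z)"
    then obtain z where q: "(z, x) \<in> R" "(z, y) \<in> FF" "(z, y) \<notin> Z" by blast
    have "x \<in> X i" using xy Ez i by blast
    then have zx: "(z, x) \<in> E i" using subF[OF R q(1) i] by blast
    then have "z \<in> X i" using Ez i by blast
    then have "(z, y) \<in> E i" using bE[OF q(2) i] by blast
    then show "(x, y) \<in> converse (R \<inter> E i) O (E i - Zi)" using q zx Z by blast
  next
    assume "(x, y) \<in> converse (R \<inter> E i) O (E i - Zi)"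
    then obtain z where q: "(z, x) \<in> R" "(z, y) \<in> E i" "(z, y) \<notin> Zi" by blast
    then show "(x, y) \<in> converse R O (FF - Z)" using Z i by blast
  qed
  then show ?thesis using i by blast
qed

lemma minus_restr: assumes R: "R \<subseteq> FF" and i: "i \<in> I" and Z: "Z \<inter> E i = Zi"
  shows "(FF - ((FF - Z) O converse R)) \<inter> E i = E i - ((E i - Zi) O converse (R \<inter> E i))"
proof -
  have "(x, y) \<in> (FF - Z) O converse R \<longleftrightarrow> (x, y) \<in> (E i - Zi) O converse (R \<inter> E i)"
    if xy: "(x, y) \<in> E i" for x y
  proof
    assume "(x, y) \<in> (FF - Z) O converse R"
    then obtain z where q: "(y, z) \<in> R" "(x, z) \<in> FF" "(x, z) \<notin> Z" by blast
    have "y \<in> X i" using xy Ez i by blast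
    then have yz: "(y, z) \<in> E i" using subF[OF R q(1) i] by blast
    then have "z \<in> X i" using Ez i by blast
    then have "(x, z) \<in> E i" using bE[OF q(2) i] by blast
    then show "(x, y) \<in> (E i - Zi) O converse (R \<inter> E i)" using q yz Z by blast
  next
    assume "(x, y) \<in> (E i - Zi) O converse (R \<inter> E i)"
    then obtain z where q: "(y, z) \<in> R" "(x, z) \<in> E i" "(x, z) \<notin> Zi" by blast
    then show "(x, y) \<in> (FF - Z) O converse R" using Z i by blast
  qed
  then show ?thesis using i by blast
qed

lemma prime_restr: assumes R: "R \<subseteq> FF" and i: "i \<in> I"
  shows "(AA O BB O (FF - R) O BB) \<inter> E i = alpha i O beta i O (E i - R \<inter> E i) O beta i"
proof (intro equalityI subsetI)
  fix p assume "p \<in> (AA O BB O (FF - R) O BB) \<inter> E i"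
  then obtain x y a b c where q: "p = (x, y)" "(x, a) \<in> AA" "(a, b) \<in> BB" "(b, c) \<in> FF" "(b, c) \<notin> R"
    "(c, y) \<in> BB" "(x, y) \<in> E i" by blast
  have "x \<in> X i" using q(7) Ez i by blast
  then have xa: "(x, a) \<in> alpha i" using bA[OF q(2) i] by blast
  then have "a \<in> X i" using Az i by blast
  then have ab: "(a, b) \<in> beta i" using bB[OF q(3) i] by blast
  then have "b \<in> X i" using Bz i by blast
  then have bc: "(b, c) \<in> E i" using bE[OF q(4) i] by blast
  then have "c \<in> X i" using Ez i by blast
  then have cy: "(c, y) \<in> beta i" using bB[OF q(6) i] by blast
  show "p \<in> alpha i O beta i O (E i - R \<inter> E i) O beta i" using q xa ab bc cy by blast
next
  fix p assume "p \<in> alpha i O beta i O (E i - R \<inter> E i) O beta i"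
  then obtain x y a b c where q: "p = (x, y)" "(x, a) \<in> alpha i" "(a, b) \<in> beta i" "(b, c) \<in> E i" "(b, c) \<notin> R"
    "(c, y) \<in> beta i" by blast
  have e: "(x, a) \<in> E i" "(a, b) \<in> E i" "(c, y) \<in> E i" using q Az Bz i by blast+
  have "(x, y) \<in> E i" using Etr[OF i e(1) Etr[OF i e(2) Etr[OF i q(4) e(3)]]] .
  then show "p \<in> (AA O BB O (FF - R) O BB) \<inter> E i" using q i by blast
qed

lemma upF: "R \<in> up_sets FF LL \<Longrightarrow> R \<subseteq> FF" unfolding up_sets_def by blast

lemma iso: "dq_iso (Dq FF LL AA BB) (dq_prod I (\<lambda>i. Dq (E i) (le i) (alpha i) (beta i))) (\<lambda>R. \<lambda>i\<in>I. R \<inter> E i)"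
proof -
  let ?h = "\<lambda>R. \<lambda>i\<in>I. R \<inter> E i"
  let ?g = "\<lambda>f. \<Union>i\<in>I. f i"
  have bij: "bij_betw ?h (up_sets FF LL) (PiE I (\<lambda>i. up_sets (E i) (le i)))"
  proof (rule bij_betw_byWitness[where f' = ?g])
    show "\<forall>R\<in>up_sets FF LL. ?g (?h R) = R" using upF by auto
    show "\<forall>f\<in>PiE I (\<lambda>i. up_sets (E i) (le i)). ?h (?g f) = f"
    proof
      fix f assume f: "f \<in> PiE I (\<lambda>i. up_sets (E i) (le i))"
      have fs: "f i \<subseteq> E i" if "i \<in> I" for i using f that unfolding up_sets_def by blast
      show "?h (?g f) = f"
      proof
        fix i show "?h (?g f) i = f i"
        proof (cases "i \<in> I")
          case True
          have "(\<Union>j\<in>I. f j) \<inter> E i = f i"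
          proof (intro equalityI subsetI)
            fix p assume "p \<in> (\<Union>j\<in>I. f j) \<inter> E i"
            moreover obtain x y where "p = (x, y)" by (cases p)
            ultimately obtain j where q: "p = (x, y)" "j \<in> I" "(x, y) \<in> f j" "(x, y) \<in> E i" by blast
            have "x \<in> X j" "x \<in> X i" using q fs Ez True by blast+
            then have "j = i" using uniq q(2) True by blast
            then show "p \<in> f i" using q by blast
          next
            fix p assume "p \<in> f i" then show "p \<in> (\<Union>j\<in>I. f j) \<inter> E i" using fs True by blast
          qed
          then show ?thesis using True by simp
        next
          case False
          then show ?thesis using f by (simp add: PiE_def extensional_def)
        qed
      qed
    qed
    show "?h ` up_sets FF LL \<subseteq> PiE I (\<lambda>i. up_sets (E i) (le i))"
      using up_restrict by auto
    show "?g ` PiE I (\<lambda>i. up_sets (E i) (le i)) \<subseteq> up_sets FF LL"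
      using up_union by auto
  qed
  have ZE: "dq_zero_rel (E i) (le i) (alpha i) = ZZ i" for i unfolding dq_zero_rel_def ZZ_def ..
  have ZF: "dq_zero_rel FF LL AA \<subseteq> FF"
  proof
    fix p assume "p \<in> dq_zero_rel FF LL AA"
    then obtain x y z i where q: "p = (x, y)" "i \<in> I" "(x, z) \<in> alpha i" "(y, z) \<in> FF"
      unfolding dq_zero_rel_def by blast
    have "z \<in> X i" using Az q by blast
    then have "(y, z) \<in> E i" using bE[OF q(4) q(2)] by blast
    then have "(x, y) \<in> E i" using Etr[OF q(2) _ Esym[OF q(2)]] Az[OF q(3) q(2)] by blast
    then show "p \<in> FF" using q by blast
  qed
  show ?thesis
    unfolding dq_iso_def
    apply (simp only: Dq_def dq_prod_def dqalg.simps)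
  proof (intro conjI ballI)
    show "bij_betw ?h (up_sets FF LL) (PiE I (\<lambda>i. up_sets (E i) (le i)))" by (rule bij)
  next
    fix R S assume R: "R \<in> up_sets FF LL" and S: "S \<in> up_sets FF LL"
    show "?h (R \<inter> S) = (\<lambda>i\<in>I. ?h R i \<inter> ?h S i)" by (rule restrict_ext) auto
    show "?h (R \<union> S) = (\<lambda>i\<in>I. ?h R i \<union> ?h S i)" by (rule restrict_ext) auto
    show "?h (R O S) = (\<lambda>i\<in>I. ?h R i O ?h S i)"
      by (rule restrict_ext) (simp add: comp_restr[OF upF[OF R] upF[OF S]])
  next
    show "?h LL = (\<lambda>i\<in>I. le i)" by (rule restrict_ext) (simp add: one_restr)
  next
    show "?h (dq_zero_rel FF LL AA) = (\<lambda>i\<in>I. dq_zero_rel (E i) (le i) (alpha i))"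
      by (rule restrict_ext) (simp add: zero_restr ZE)
  next
    fix R assume R: "R \<in> up_sets FF LL"
    show "?h (FF - converse R O (FF - dq_zero_rel FF LL AA)) =
      (\<lambda>i\<in>I. E i - converse (?h R i) O (E i - dq_zero_rel (E i) (le i) (alpha i)))"
      by (rule restrict_ext) (simp add: tilde_restr[OF upF[OF R] _ zero_restr] ZE)
    show "?h (FF - (FF - dq_zero_rel FF LL AA) O converse R) =
      (\<lambda>i\<in>I. E i - (E i - dq_zero_rel (E i) (le i) (alpha i)) O converse (?h R i))"
      by (rule restrict_ext) (simp add: minus_restr[OF upF[OF R] _ zero_restr] ZE)
    show "?h (AA O BB O (FF - R) O BB) = (\<lambda>i\<in>I. alpha i O beta i O (E i - ?h R i) O beta i)"
      by (rule restrict_ext) (simp add: prime_restr[OF upF[OF R]])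
  qed
qed

end

theorem theorem4p1:
  fixes I :: "'i set"
    and X :: "'i \<Rightarrow> 'a set"
    and le E alpha beta :: "'i \<Rightarrow> ('a \<times> 'a) set"
  assumes poset: "\<And>i. i \<in> I \<Longrightarrow> partial_order_on (X i) (le i)"
    and equivE: "\<And>i. i \<in> I \<Longrightarrow> equiv (X i) (E i)"
    and leE: "\<And>i. i \<in> I \<Longrightarrow> le i \<subseteq> E i"
    and disj: "\<And>i j. i \<in> I \<Longrightarrow> j \<in> I \<Longrightarrow> i \<noteq> j \<Longrightarrow> X i \<inter> X j = {}"
    and alpha_aut: "\<And>i. i \<in> I \<Longrightarrow> order_aut (X i) (le i) (alpha i)"
    and beta_aut: "\<And>i. i \<in> I \<Longrightarrow> dual_order_aut (X i) (le i) (beta i)"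
    and beta_inv: "\<And>i. i \<in> I \<Longrightarrow> self_inverse (X i) (beta i)"
    and alphaE: "\<And>i. i \<in> I \<Longrightarrow> alpha i \<subseteq> E i"
    and betaE: "\<And>i. i \<in> I \<Longrightarrow> beta i \<subseteq> E i"
    and beta_eq: "\<And>i. i \<in> I \<Longrightarrow> beta i = alpha i O beta i O alpha i"
  shows "partial_order_on (\<Union>i\<in>I. X i) (\<Union>i\<in>I. le i)
       \<and> equiv (\<Union>i\<in>I. X i) (\<Union>i\<in>I. E i)
       \<and> (\<Union>i\<in>I. le i) \<subseteq> (\<Union>i\<in>I. E i)
       \<and> order_aut (\<Union>i\<in>I. X i) (\<Union>i\<in>I. le i) (\<Union>i\<in>I. alpha i)
       \<and> (\<Union>i\<in>I. alpha i) \<subseteq> (\<Union>i\<in>I. E i)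
       \<and> dual_order_aut (\<Union>i\<in>I. X i) (\<Union>i\<in>I. le i) (\<Union>i\<in>I. beta i)
       \<and> self_inverse (\<Union>i\<in>I. X i) (\<Union>i\<in>I. beta i)
       \<and> (\<Union>i\<in>I. beta i) \<subseteq> (\<Union>i\<in>I. E i)
       \<and> (\<Union>i\<in>I. beta i) = (\<Union>i\<in>I. alpha i) O (\<Union>i\<in>I. beta i) O (\<Union>i\<in>I. alpha i)
       \<and> dq_isomorphic
           (Dq (\<Union>i\<in>I. E i) (\<Union>i\<in>I. le i) (\<Union>i\<in>I. alpha i) (\<Union>i\<in>I. beta i))
           (dq_prod I (\<lambda>i. Dq (E i) (le i) (alpha i) (beta i)))"
proof -
  interpret blk I X le E alpha beta
    by (unfold_locales; fact assms)
  show ?thesis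
    using part1 part2 part3 part4 part5 part6 part7 part8 part9 iso
    unfolding dq_isomorphic_def by blast
qed

end
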